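(* Let $\Lambda$ denote the von Mangoldt function and let $\varepsilon>0$ be a small number. Then, as $x\to\infty$, \[ \sum_{n\leq x}\Lambda([x/n])\Lambda(2[x/n]+1) = s_1 x + O\left(x^{(2+\varepsilon)/3}\log^2 x\right), \] where the density constant is \[ s_1=\sum_{n\geq 1}\frac{\Lambda(n)\Lambda(2n+1)}{n(n+1)}\geq 0.620794. \]
   Context: $[t]$ denotes the largest integer not exceeding $t$. The von Mangoldt function is $\Lambda(m)=\log p$ if $m=p^k$ for a prime $p$ and an integer $k\geq 1$, and $\Lambda(m)=0$ otherwise. The sum is over positive integers $n\le x$. *)

theory Defs
  imports "HOL-Analysis.Analysis" "HOL-Number_Theory.Prime_Powers" "HOL-Library.Landau_Symbols"
begin

end

theory Submission
  imports Defs "HOL-Real_Asymp.Real_Asymp"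
begin

definition ff :: "nat \<Rightarrow> real" where "ff m = mangoldt m * mangoldt (2*m+1)"

lemma ff_nonneg: "0 \<le> ff m"
  unfolding ff_def by (simp add: mangoldt_nonneg)

lemma mangoldt_le_ln21: "mangoldt m \<le> ln (2 * real m + 1)"
proof (cases "m = 0")
  case True then show ?thesis by simp
next
  case False
  then have "mangoldt m \<le> ln (real m)" by (simp add: mangoldt_le)
  also have "\<dots> \<le> ln (2 * real m + 1)" using False by simp
  finally show ?thesis .
qed

lemma ff_le: "ff m \<le> ln (2 * real m + 1) ^ 2"
proof -
  have e: "real (2*m+1) = 2 * real m + 1" by simp
  have a: "mangoldt (2*m+1) \<le> ln (2 * real m + 1)"
    using mangoldt_le[of "2*m+1"] unfolding e by simp
  have "ff m \<le> ln (2 * real m + 1) * ln (2 * real m + 1)"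
    unfolding ff_def by (rule mult_mono[OF mangoldt_le_ln21 a]) (auto simp: mangoldt_nonneg)
  then show ?thesis by (simp add: power2_eq_square)
qed

lemma ff_le_x: "real m \<le> x \<Longrightarrow> ff m \<le> ln (2 * x + 1) ^ 2"
proof -
  assume h: "real m \<le> x"
  have "ln (2 * real m + 1) \<le> ln (2 * x + 1)" using h by simp
  moreover have "0 \<le> ln (2 * real m + 1)" by simp
  ultimately have "ln (2 * real m + 1) ^ 2 \<le> ln (2 * x + 1) ^ 2" by (rule power_mono)
  then show ?thesis using ff_le[of m] by linarith
qed

lemma ff_sqrt: "ff m \<le> 16 * sqrt (2 * real m + 1)"
proof -
  define y where "y = 2 * real m + 1"
  have y1: "y \<ge> 1" unfolding y_def by simp
  have "ln y \<le> y powr (1/4) / (1/4)" using ln_powr_bound[OF y1, of "1/4"] by simp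
  then have l: "ln y \<le> 4 * y powr (1/4)" by simp
  have l0: "0 \<le> ln y" using y1 by simp
  have "ln y ^ 2 \<le> (4 * y powr (1/4)) ^ 2" using power_mono[OF l l0] .
  also have "\<dots> = 16 * (y powr (1/4) * y powr (1/4))" by (simp add: power2_eq_square)
  also have "y powr (1/4) * y powr (1/4) = y powr (1/2)" using y1 by (simp add: powr_add[symmetric])
  also have "y powr (1/2) = sqrt y" using y1 by (simp add: powr_half_sqrt)
  finally show ?thesis using ff_le[of m] unfolding y_def by linarith
qed

definition gg :: "nat \<Rightarrow> real" where "gg k = ff (Suc k) / (real (Suc k) * real (Suc k + 1))"

lemma gg_nonneg: "0 \<le> gg k" unfolding gg_def by (simp add: ff_nonneg)

lemma tele_ineq:
  fixes a u v :: real
  assumes a: "a \<ge> 1" and u: "u = sqrt a" and v: "v = sqrt (a + 1)"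
  shows "24 * v / (a * (a + 1)) \<le> 100 * (1 / u - 1 / v)"
proof -
  have u0: "u > 0" "u * u = a" using a u by auto
  have v0: "v > 0" "v * v = a + 1" using a v by auto
  have vu: "v \<le> 2 * u"
  proof -
    have "v \<le> sqrt (4 * a)" unfolding v using a by (intro real_sqrt_le_mono) simp
    also have "\<dots> = 2 * u" unfolding u by (simp add: real_sqrt_mult)
    finally show ?thesis .
  qed
  have d: "1 / u - 1 / v = 1 / (u * v * (u + v))"
  proof -
    have "(v - u) * (u + v) = 1" using u0 v0 by (simp add: algebra_simps)
    then have vu1: "v - u = 1 / (u + v)" using u0 v0 by (simp add: field_simps)
    have "1 / u - 1 / v = (v - u) / (u * v)" using u0 v0 by (simp add: field_simps)
    also have "\<dots> = 1 / (u * v * (u + v))" unfolding vu1 by simp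
    finally show ?thesis .
  qed
  have aa: "a * (a + 1) = (u * u * v) * v" using u0 v0 by (simp add: algebra_simps)
  have l: "24 * v / (a * (a + 1)) = 24 / (u * u * v)"
    unfolding aa using v0(1) by simp
  have pos: "u * u * v * (u + v) > 0" using u0(1) v0(1) by simp
  have e1: "24 / (u * u * v) = (24 * (u + v)) / ((u * u * v) * (u + v))"
    using u0(1) v0(1) by (intro nonzero_mult_divide_mult_cancel_right[symmetric]) simp
  have e2: "100 / (u * v * (u + v)) = (u * 100) / (u * (u * v * (u + v)))"
    using u0(1) v0(1) by (intro nonzero_mult_divide_mult_cancel_left[symmetric]) simp
  have dd: "u * (u * v * (u + v)) = (u * u * v) * (u + v)" by (simp add: algebra_simps)
  have "(24 * (u + v)) / ((u * u * v) * (u + v)) \<le> (u * 100) / ((u * u * v) * (u + v))"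
    using pos vu u0 by (intro divide_right_mono) simp_all
  then show ?thesis using l d e1 e2 dd by simp
qed

lemma gg_tele: "gg k \<le> 100 * (1 / sqrt (real k + 1) - 1 / sqrt (real k + 2))"
proof -
  define a where "a = real k + 1"
  have a1: "a \<ge> 1" unfolding a_def by simp
  have s2: "sqrt (2::real) \<le> 3/2" by (rule real_le_lsqrt) (simp_all add: power2_eq_square)
  have "ff (Suc k) \<le> 16 * sqrt (2 * a + 1)" using ff_sqrt[of "Suc k"] unfolding a_def by simp
  also have "sqrt (2 * a + 1) \<le> sqrt 2 * sqrt (a + 1)"
    by (simp add: real_sqrt_mult[symmetric])
  also have "sqrt 2 * sqrt (a + 1) \<le> 3/2 * sqrt (a + 1)"
    using s2 a1 by (intro mult_right_mono) simp_all
  finally have f: "ff (Suc k) \<le> 24 * sqrt (a + 1)" by simp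
  have "gg k = ff (Suc k) / (a * (a + 1))" unfolding gg_def a_def by simp
  also have "\<dots> \<le> 24 * sqrt (a + 1) / (a * (a + 1))"
    using f a1 by (simp add: divide_right_mono)
  also have "\<dots> \<le> 100 * (1 / sqrt a - 1 / sqrt (a + 1))" by (rule tele_ineq[OF a1 refl refl])
  finally show ?thesis unfolding a_def by (simp add: add.assoc)
qed


lemma tail_facts:
  fixes M :: nat
  shows "summable (\<lambda>n. gg (n + M)) \<and> 0 \<le> (\<Sum>n. gg (n + M)) \<and> (\<Sum>n. gg (n + M)) \<le> 100 / sqrt (real M + 1)"
proof -
  define h where "h n = 100 / sqrt (real (n + M) + 1)" for n
  have lim: "h \<longlonglongrightarrow> 0" unfolding h_def by real_asymp
  have hs: "(\<lambda>n. h n - h (Suc n)) sums (h 0 - 0)" by (rule telescope_sums'[OF lim])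
  have le: "gg (n + M) \<le> h n - h (Suc n)" for n
    using gg_tele[of "n + M"] unfolding h_def by (simp add: algebra_simps)
  have sg: "summable (\<lambda>n. gg (n + M))"
    by (rule summable_comparison_test[of _ "\<lambda>n. h n - h (Suc n)"])
       (use le gg_nonneg hs in \<open>auto simp: sums_iff\<close>)
  have "(\<Sum>n. gg (n + M)) \<le> (\<Sum>n. h n - h (Suc n))"
    by (rule suminf_le[OF le sg]) (use hs in \<open>simp add: sums_iff\<close>)
  also have "\<dots> = h 0" using hs by (simp add: sums_iff)
  finally have "(\<Sum>n. gg (n + M)) \<le> 100 / sqrt (real M + 1)" unfolding h_def by simp
  moreover have "0 \<le> (\<Sum>n. gg (n + M))" by (rule suminf_nonneg[OF sg]) (simp add: gg_nonneg)
  ultimately show ?thesis using sg by simp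
qed

lemma gg_summable: "summable gg"
  using tail_facts[of 0] by simp

lemma gg_partial: "(\<Sum>m<M. gg m) = (\<Sum>m\<in>{1..M}. ff m / (real m * (real m + 1)))"
proof (induction M)
  case 0 then show ?case by simp
next
  case (Suc M) then show ?case by (simp add: gg_def)
qed

lemma count_lemma:
  fixes x :: real and m :: nat
  assumes x: "x \<ge> 0" and m: "m \<ge> 1"
  shows "{n \<in> {1..nat \<lfloor>x\<rfloor>}. nat \<lfloor>x / real n\<rfloor> = m} = {nat \<lfloor>x / real (m+1)\<rfloor><..nat \<lfloor>x / real m\<rfloor>}"
proof (intro set_eqI iffI)
  fix n assume "n \<in> {n \<in> {1..nat \<lfloor>x\<rfloor>}. nat \<lfloor>x / real n\<rfloor> = m}"
  then have n1: "n \<ge> 1" and q: "nat \<lfloor>x / real n\<rfloor> = m" by auto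
  then have "\<lfloor>x / real n\<rfloor> = int m" using m by linarith
  then have lo: "real m \<le> x / real n" and hi: "x / real n < real m + 1"
    by linarith+
  have np: "real n > 0" using n1 by simp
  from lo have "real m * real n \<le> x" using np by (simp add: field_simps)
  then have "real n \<le> x / real m" using m by (simp add: field_simps)
  then have a: "n \<le> nat \<lfloor>x / real m\<rfloor>" by (simp add: le_nat_floor)
  from hi have "x < (real m + 1) * real n" using np by (simp add: field_simps)
  then have "x / real (m+1) < real n" by (simp add: field_simps)
  then have f: "\<lfloor>x / real (m+1)\<rfloor> < int n" by (simp add: floor_less_iff)
  have f0: "0 \<le> \<lfloor>x / real (m+1)\<rfloor>" using x by simp
  have b: "nat \<lfloor>x / real (m+1)\<rfloor> < n" using f f0 by (simp add: nat_less_iff)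
  show "n \<in> {nat \<lfloor>x / real (m+1)\<rfloor><..nat \<lfloor>x / real m\<rfloor>}" using a b by simp
next
  fix n assume "n \<in> {nat \<lfloor>x / real (m+1)\<rfloor><..nat \<lfloor>x / real m\<rfloor>}"
  then have a: "n \<le> nat \<lfloor>x / real m\<rfloor>" and b: "nat \<lfloor>x / real (m+1)\<rfloor> < n" by auto
  have n1: "n \<ge> 1" using b by simp
  have np: "real n > 0" using n1 by simp
  have g0: "0 \<le> \<lfloor>x / real m\<rfloor>" using x by simp
  have "int n \<le> \<lfloor>x / real m\<rfloor>" using a g0 by (simp add: le_nat_iff)
  then have "real n \<le> x / real m" by (simp add: le_floor_iff)
  then have c: "real m * real n \<le> x" using m by (simp add: field_simps)
  have f0: "0 \<le> \<lfloor>x / real (m+1)\<rfloor>" using x by simp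
  have "\<lfloor>x / real (m+1)\<rfloor> < int n" using b f0 by (simp add: nat_less_iff)
  then have "x / real (m+1) < real n" by (simp add: floor_less_iff)
  then have d: "x < (real m + 1) * real n" by (simp add: field_simps)
  have "real m \<le> x / real n" using c np by (simp add: field_simps)
  moreover have "x / real n < real m + 1" using d np by (simp add: field_simps)
  ultimately have "\<lfloor>x / real n\<rfloor> = int m" by (simp add: floor_eq_iff)
  then have q: "nat \<lfloor>x / real n\<rfloor> = m" by simp
  have "real n * 1 \<le> real n * real m" using m by (intro mult_left_mono) simp_all
  then have "real n \<le> x" using c by (simp add: mult.commute)
  then have "n \<le> nat \<lfloor>x\<rfloor>" by (simp add: le_nat_floor)
  then show "n \<in> {n \<in> {1..nat \<lfloor>x\<rfloor>}. nat \<lfloor>x / real n\<rfloor> = m}" using n1 q by simp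
qed


lemma floor_diff_err:
  fixes a b :: real
  shows "\<bar>(real_of_int \<lfloor>a\<rfloor> - real_of_int \<lfloor>b\<rfloor>) - (a - b)\<bar> \<le> 1"
proof -
  have "real_of_int \<lfloor>a\<rfloor> \<le> a" "a < real_of_int \<lfloor>a\<rfloor> + 1"
       "real_of_int \<lfloor>b\<rfloor> \<le> b" "b < real_of_int \<lfloor>b\<rfloor> + 1" by linarith+
  then show ?thesis by linarith
qed

lemma nat_floor_bounds:
  fixes y :: real
  assumes "y \<ge> 0"
  shows "real (nat \<lfloor>y\<rfloor>) \<le> y \<and> y < real (nat \<lfloor>y\<rfloor>) + 1"
proof -
  have "0 \<le> \<lfloor>y\<rfloor>" using assms by simp
  then have "real (nat \<lfloor>y\<rfloor>) = real_of_int \<lfloor>y\<rfloor>" by (simp add: of_nat_nat)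
  moreover have "real_of_int \<lfloor>y\<rfloor> \<le> y" "y < real_of_int \<lfloor>y\<rfloor> + 1" by linarith+
  ultimately show ?thesis by simp
qed

lemma main_bound:
  fixes x :: real
  assumes x3: "x \<ge> 3"
  shows "\<bar>(\<Sum>n\<in>{1..nat \<lfloor>x\<rfloor>}. ff (nat \<lfloor>x / real n\<rfloor>)) - (\<Sum>m. gg m) * x\<bar>
          \<le> 102 * (x powr (2/3) * ln (2 * x + 1) ^ 2)"
proof -
  define A where "A = {1..nat \<lfloor>x\<rfloor>}"
  define q where "q n = nat \<lfloor>x / real n\<rfloor>" for n
  define M where "M = nat \<lfloor>x powr (2/3)\<rfloor>"
  define L2 where "L2 = ln (2 * x + 1) ^ 2"
  define t where "t = x powr (1/3)"
  have xp: "x > 0" using x3 by simp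
  have t1: "t \<ge> 1" unfolding t_def using x3 by (intro ge_one_powr_ge_zero) auto
  have tt: "t * t = x powr (2/3)" unfolding t_def by (simp add: powr_add[symmetric])
  have ttt: "t * t * t = x" unfolding t_def using xp by (simp add: powr_add[symmetric])
  have ft: "finite A" unfolding A_def by simp
  have qA: "1 \<le> q n \<and> real (q n) \<le> x" if "n \<in> A" for n
  proof -
    from that have n1: "n \<ge> 1" and nx: "n \<le> nat \<lfloor>x\<rfloor>" unfolding A_def by auto
    have "int n \<le> \<lfloor>x\<rfloor>" using nx xp by (simp add: le_nat_iff)
    then have "real n \<le> x" by (simp add: le_floor_iff)
    then have "1 \<le> x / real n" using n1 by (simp add: field_simps)
    then have "1 \<le> \<lfloor>x / real n\<rfloor>" by (simp add: le_floor_iff)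
    then have a: "1 \<le> q n" unfolding q_def by (subst le_nat_iff) auto
    have "x / real n \<le> x" using n1 xp by (simp add: field_simps)
    moreover have "real (q n) \<le> x / real n" unfolding q_def using xp nat_floor_bounds[of "x / real n"] by simp
    ultimately show ?thesis using a by linarith
  qed
  have M_le: "real M \<le> t * t" and M_gt: "t * t < real M + 1"
    unfolding M_def tt using nat_floor_bounds[of "x powr (2/3)"] by auto
  have L2_1: "L2 \<ge> 1"
  proof -
    have "ln 4 \<le> ln (2 * x + 1)" using x3 by simp
    moreover have "ln (4::real) = 2 * ln 2" using ln_realpow[of 2 2] by simp
    moreover have "2/3 \<le> ln (2::real)" by (rule ln2_ge_two_thirds)
    ultimately have "1 \<le> ln (2 * x + 1)" by linarith
    then show ?thesis unfolding L2_def by (simp add: one_le_power)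
  qed
  have "t * t * 1 \<le> t * t * t" using t1 by (intro mult_left_mono) auto
  then have tt_le_x: "t * t \<le> x" using ttt by simp
  have M_x: "real M \<le> x" using M_le tt_le_x by linarith
  define S1 where "S1 = (\<Sum>n\<in>{n\<in>A. q n \<le> M}. ff (q n))"
  define S2 where "S2 = (\<Sum>n\<in>{n\<in>A. \<not> q n \<le> M}. ff (q n))"
  have split: "(\<Sum>n\<in>A. ff (q n)) = S1 + S2"
  proof -
    have "A = {n\<in>A. q n \<le> M} \<union> {n\<in>A. \<not> q n \<le> M}" by auto
    then have "(\<Sum>n\<in>A. ff (q n)) = (\<Sum>n\<in>{n\<in>A. q n \<le> M} \<union> {n\<in>A. \<not> q n \<le> M}. ff (q n))" by simp
    also have "\<dots> = S1 + S2" unfolding S1_def S2_def using ft by (intro sum.union_disjoint) auto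
    finally show ?thesis .
  qed
  define c where "c m = real (card {n\<in>A. q n = m})" for m
  have S1_eq: "S1 = (\<Sum>m\<in>{1..M}. ff m * c m)"
  proof -
    have "S1 = (\<Sum>m\<in>{1..M}. \<Sum>n\<in>{n\<in>{n\<in>A. q n \<le> M}. q n = m}. ff (q n))"
      unfolding S1_def using ft qA by (intro sum.group[symmetric]) auto
    also have "\<dots> = (\<Sum>m\<in>{1..M}. ff m * c m)"
    proof (intro sum.cong refl)
      fix m assume m: "m \<in> {1..M}"
      have e: "{n\<in>{n\<in>A. q n \<le> M}. q n = m} = {n\<in>A. q n = m}" using m by auto
      have "(\<Sum>n\<in>{n\<in>A. q n = m}. ff (q n)) = (\<Sum>n\<in>{n\<in>A. q n = m}. ff m)" by (intro sum.cong) auto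
      then show "(\<Sum>n\<in>{n\<in>{n\<in>A. q n \<le> M}. q n = m}. ff (q n)) = ff m * c m"
        unfolding e c_def by simp
    qed
    finally show ?thesis .
  qed
  have c_err: "\<bar>c m - x / (real m * (real m + 1))\<bar> \<le> 1" if m: "m \<ge> 1" for m
  proof -
    have set: "{n\<in>A. q n = m} = {nat \<lfloor>x / real (m+1)\<rfloor><..nat \<lfloor>x / real m\<rfloor>}"
      unfolding A_def q_def using count_lemma[of x m] xp m by simp
    have mono: "x / real (m+1) \<le> x / real m" using xp m by (intro divide_left_mono) auto
    have f0: "0 \<le> \<lfloor>x / real (m+1)\<rfloor>" using xp by simp
    have fm: "\<lfloor>x / real (m+1)\<rfloor> \<le> \<lfloor>x / real m\<rfloor>" using mono by (rule floor_mono)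
    have "c m = real (nat \<lfloor>x / real m\<rfloor> - nat \<lfloor>x / real (m+1)\<rfloor>)" unfolding c_def set by simp
    also have "\<dots> = real (nat \<lfloor>x / real m\<rfloor>) - real (nat \<lfloor>x / real (m+1)\<rfloor>)"
      using nat_mono[OF fm] by (rule of_nat_diff)
    also have "\<dots> = real_of_int \<lfloor>x / real m\<rfloor> - real_of_int \<lfloor>x / real (m+1)\<rfloor>"
      using f0 order_trans[OF f0 fm] by (simp only: of_nat_nat)
    finally have ce: "c m = real_of_int \<lfloor>x / real m\<rfloor> - real_of_int \<lfloor>x / real (m+1)\<rfloor>" .
    have "x / real m - x / real (m+1) = x / (real m * (real m + 1))"
      using m by (simp add: field_simps)
    then show ?thesis using ce floor_diff_err[of "x / real m" "x / real (m+1)"] by simp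
  qed
  define P where "P = (\<Sum>m\<in>{1..M}. ff m / (real m * (real m + 1)))"
  have S1_err: "\<bar>S1 - x * P\<bar> \<le> real M * L2"
  proof -
    have "S1 - x * P = (\<Sum>m\<in>{1..M}. ff m * (c m - x / (real m * (real m + 1))))"
      unfolding S1_eq P_def by (simp add: sum_distrib_left sum_subtractf[symmetric] algebra_simps)
    also have "\<bar>\<dots>\<bar> \<le> (\<Sum>m\<in>{1..M}. \<bar>ff m * (c m - x / (real m * (real m + 1)))\<bar>)"
      by (rule sum_abs)
    also have "\<dots> \<le> (\<Sum>m\<in>{1..M}. L2)"
    proof (intro sum_mono)
      fix m assume m: "m \<in> {1..M}"
      have "\<bar>ff m * (c m - x / (real m * (real m + 1)))\<bar> = ff m * \<bar>c m - x / (real m * (real m + 1))\<bar>"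
        using ff_nonneg[of m] by (simp add: abs_mult)
      also have "\<dots> \<le> ff m * 1" using c_err[of m] m ff_nonneg[of m] by (intro mult_left_mono) auto
      also have "\<dots> \<le> L2" unfolding L2_def using ff_le_x[of m x] m M_x by simp
      finally show "\<bar>ff m * (c m - x / (real m * (real m + 1)))\<bar> \<le> L2" .
    qed
    also have "\<dots> = real M * L2" by simp
    finally show ?thesis .
  qed
  have S2_bd: "0 \<le> S2 \<and> S2 \<le> x / (real M + 1) * L2"
  proof -
    have sub: "{n\<in>A. \<not> q n \<le> M} \<subseteq> {1..nat \<lfloor>x / (real M + 1)\<rfloor>}"
    proof
      fix n assume n: "n \<in> {n\<in>A. \<not> q n \<le> M}"
      then have n1: "n \<ge> 1" and qn: "M + 1 \<le> q n" unfolding A_def by auto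
      have np: "real n > 0" using n1 by simp
      have "real (M + 1) \<le> real (q n)" using qn by simp
      moreover have "real (q n) \<le> x / real n" unfolding q_def using nat_floor_bounds[of "x / real n"] xp by simp
      ultimately have "real M + 1 \<le> x / real n" by simp
      then have "real n * (real M + 1) \<le> x" using np by (simp add: field_simps)
      then have "real n \<le> x / (real M + 1)" by (simp add: field_simps)
      then have "n \<le> nat \<lfloor>x / (real M + 1)\<rfloor>" by (simp add: le_nat_floor)
      then show "n \<in> {1..nat \<lfloor>x / (real M + 1)\<rfloor>}" using n1 by simp
    qed
    have cardle: "real (card {n\<in>A. \<not> q n \<le> M}) \<le> x / (real M + 1)"
    proof -
      have "card {n\<in>A. \<not> q n \<le> M} \<le> card {1..nat \<lfloor>x / (real M + 1)\<rfloor>}"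
        by (rule card_mono[OF _ sub]) simp
      then have "real (card {n\<in>A. \<not> q n \<le> M}) \<le> real (nat \<lfloor>x / (real M + 1)\<rfloor>)" by simp
      also have "\<dots> \<le> x / (real M + 1)" using xp nat_floor_bounds[of "x / (real M + 1)"] by simp
      finally show ?thesis .
    qed
    have "S2 \<le> (\<Sum>n\<in>{n\<in>A. \<not> q n \<le> M}. L2)"
      unfolding S2_def L2_def using qA by (intro sum_mono ff_le_x) auto
    also have "\<dots> = real (card {n\<in>A. \<not> q n \<le> M}) * L2" by simp
    also have "\<dots> \<le> x / (real M + 1) * L2" using cardle L2_1 by (intro mult_right_mono) auto
    finally have "S2 \<le> x / (real M + 1) * L2" .
    moreover have "0 \<le> S2" unfolding S2_def by (intro sum_nonneg) (simp add: ff_nonneg)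
    ultimately show ?thesis by simp
  qed
  define T where "T = (\<Sum>n. gg (n + M))"
  have sT: "(\<Sum>m. gg m) = P + T"
    unfolding T_def P_def using suminf_minus_initial_segment[OF gg_summable, of M] gg_partial[of M] by simp
  have T_bd: "0 \<le> T \<and> T \<le> 100 / sqrt (real M + 1)" unfolding T_def using tail_facts[of M] by simp
  have "(\<Sum>n\<in>A. ff (q n)) - (\<Sum>m. gg m) * x = (S1 - x * P) + S2 - x * T"
    using split sT by (simp add: algebra_simps)
  then have "\<bar>(\<Sum>n\<in>A. ff (q n)) - (\<Sum>m. gg m) * x\<bar> \<le> real M * L2 + x / (real M + 1) * L2 + x * (100 / sqrt (real M + 1))"
  proof -
    have "0 \<le> x * T" using xp T_bd by simp
    moreover have "x * T \<le> x * (100 / sqrt (real M + 1))" using xp T_bd by (intro mult_left_mono) auto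
    moreover note S1_err S2_bd
    moreover assume "(\<Sum>n\<in>A. ff (q n)) - (\<Sum>m. gg m) * x = (S1 - x * P) + S2 - x * T"
    ultimately show ?thesis by linarith
  qed
  moreover have "real M * L2 \<le> (t * t) * L2" using M_le L2_1 by (intro mult_right_mono) auto
  moreover have "x / (real M + 1) * L2 \<le> (t * t) * L2"
  proof -
    have "x / (real M + 1) \<le> x / (t * t)" using M_gt t1 xp by (intro divide_left_mono) auto
    also have "x / (t * t) = t" using ttt t1 by (simp add: field_simps)
    also have "t \<le> t * t" using t1 by simp
    finally show ?thesis using L2_1 by (intro mult_right_mono) auto
  qed
  moreover have "x * (100 / sqrt (real M + 1)) \<le> 100 * (t * t)"
  proof -
    have "t \<le> sqrt (real M + 1)" using M_gt t1 by (intro real_le_rsqrt) (simp add: power2_eq_square)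
    then have "x / sqrt (real M + 1) \<le> x / t" using t1 xp by (intro divide_left_mono) auto
    also have "x / t = t * t" using ttt t1 by (simp add: field_simps)
    finally have "x / sqrt (real M + 1) \<le> t * t" .
    moreover have "x * (100 / sqrt (real M + 1)) = 100 * (x / sqrt (real M + 1))" by simp
    ultimately show ?thesis by linarith
  qed
  moreover have "100 * (t * t) \<le> 100 * ((t * t) * L2)" using L2_1 t1 by simp
  ultimately have "\<bar>(\<Sum>n\<in>A. ff (q n)) - (\<Sum>m. gg m) * x\<bar> \<le> 102 * ((t * t) * L2)" by linarith
  then show ?thesis unfolding A_def q_def tt L2_def .
qed


lemma lnpow: fixes p :: nat and a b :: nat
  assumes "2^b \<le> p^a" "a > 0"
  shows "ln (real p) \<ge> (real b / real a) * ln 2"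
proof -
  have p: "p > 0" proof (rule ccontr)
    assume "\<not> p > 0" then have "p = 0" by simp
    then show False using assms by (simp add: zero_power)
  qed
  have "real b * ln 2 = ln ((2::real)^b)" by (simp add: ln_realpow)
  also have "\<dots> \<le> ln (real p ^ a)" using assms p
    by (subst ln_le_cancel_iff) (auto simp flip: of_nat_power)
  also have "\<dots> = real a * ln (real p)" using p by (simp add: ln_realpow)
  finally show ?thesis using assms by (simp add: field_simps)
qed


lemma numeric:
  "(\<Sum>m<11. mangoldt (Suc m) * mangoldt (2 * Suc m + 1) / (real (Suc m) * real (Suc m + 1)) :: real) \<ge> 0.620794"
proof -
  have c: "ln (2::real) \<ge> 307/443" using ln_approx_bounds[of 2 3] by (simp add: eval_nat_numeral)
  have l3: "ln (real (3::nat)) \<ge> (19/12) * ln 2" using lnpow[of 19 3 12] by simp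
  have l5: "ln (real (5::nat)) \<ge> (30/13) * ln 2" using lnpow[of 30 5 13] by simp
  have l7: "ln (real (7::nat)) \<ge> (14/5) * ln 2" using lnpow[of 14 7 5] by simp
  have l11: "ln (real (11::nat)) \<ge> (24/7) * ln 2" using lnpow[of 24 11 7] by simp
  have l17: "ln (real (17::nat)) \<ge> 4 * ln 2" using lnpow[of 4 17 1] by simp
  have l19: "ln (real (19::nat)) \<ge> (21/5) * ln 2" using lnpow[of 21 19 5] by simp
  have l23: "ln (real (23::nat)) \<ge> (9/2) * ln 2" using lnpow[of 9 23 2] by simp
  have p: "prime (2::nat)" "prime (3::nat)" "prime (5::nat)" "prime (7::nat)" "prime (11::nat)"
     "prime (17::nat)" "prime (19::nat)" "prime (23::nat)" by code_simp+
  have m2: "mangoldt 2 = (ln 2::real)" using mangoldt_prime[OF p(1)] by simp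
  have m2b: "mangoldt (Suc (Suc 0)) = (ln 2::real)" using m2 by (simp add: numeral_2_eq_2)
  have m3: "mangoldt 3 = (ln (real (3::nat))::real)" using mangoldt_prime[OF p(2)] by simp
  have m4: "mangoldt 4 = (ln 2::real)" using mangoldt_primepow'[OF p(1), of 2, where 'a=real] by simp
  have m8: "mangoldt 8 = (ln 2::real)" using mangoldt_primepow'[OF p(1), of 3, where 'a=real] by simp
  have m9: "mangoldt 9 = (ln (real (3::nat))::real)" using mangoldt_primepow'[OF p(2), of 2, where 'a=real] by simp
  have m5: "mangoldt 5 = (ln (real (5::nat))::real)" using mangoldt_prime[OF p(3)] by simp
  have m7: "mangoldt 7 = (ln (real (7::nat))::real)" using mangoldt_prime[OF p(4)] by simp
  have m11: "mangoldt 11 = (ln (real (11::nat))::real)" using mangoldt_prime[OF p(5)] by simp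
  have m17: "mangoldt 17 = (ln (real (17::nat))::real)" using mangoldt_prime[OF p(6)] by simp
  have m19: "mangoldt 19 = (ln (real (19::nat))::real)" using mangoldt_prime[OF p(7)] by simp
  have m23: "mangoldt 23 = (ln (real (23::nat))::real)" using mangoldt_prime[OF p(8)] by simp
  have nn: "\<And>a b. 0 \<le> (mangoldt a * mangoldt b :: real)" by (simp add: mangoldt_nonneg)
  have pr: "\<And>a b (u::real) v. a \<ge> 0 \<Longrightarrow> b \<ge> 0 \<Longrightarrow> u \<ge> a \<Longrightarrow> v \<ge> b \<Longrightarrow> u * v \<ge> a * b"
    by (meson mult_mono order_trans)
  have cL: "ln (2::real) \<ge> 307/443" using c by simp
  have L0: "ln (2::real) \<ge> 0" using cL by simp
  have ls: "{..<11::nat} = {0,1,2,3,4,5,6,7,8,9,10}" by (rule set_eqI) (simp, presburger)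
  have "(\<Sum>m<11. mangoldt (Suc m) * mangoldt (2 * Suc m + 1) / (real (Suc m) * real (Suc m + 1)) :: real)
     \<ge> ln 2 * ln (real (5::nat)) / 6 + ln (real (3::nat)) * ln (real (7::nat)) / 12
      + ln 2 * ln (real (3::nat)) / 20 + ln (real (5::nat)) * ln (real (11::nat)) / 30
      + ln 2 * ln (real (17::nat)) / 72 + ln (real (3::nat)) * ln (real (19::nat)) / 90
      + ln (real (11::nat)) * ln (real (23::nat)) / 132"
    unfolding ls apply (simp add: m2b m2 m3 m4 m5 m7 m8 m9 m11 m17 m19 m23 del: of_nat_numeral)
    using nn[of 6 13] nn[of 7 15] nn[of 10 21] nn[of 1 3] nn[of 12 25]
    by simp
  moreover have "ln 2 * ln (real (5::nat)) / 6 + ln (real (3::nat)) * ln (real (7::nat)) / 12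
      + ln 2 * ln (real (3::nat)) / 20 + ln (real (5::nat)) * ln (real (11::nat)) / 30
      + ln 2 * ln (real (17::nat)) / 72 + ln (real (3::nat)) * ln (real (19::nat)) / 90
      + ln (real (11::nat)) * ln (real (23::nat)) / 132 \<ge> (ln 2 * ln 2) * (4840681/3603600)"
  proof -
    have a0: "0 \<le> (c::real) * ln (2::real)" if "c \<ge> 0" for c using L0 that by simp
    have "ln 2 * ln (real (5::nat)) \<ge> (ln 2 * ln 2) * (30/13)" using pr[OF L0 a0 _ l5] by (simp add: algebra_simps)
    moreover have "ln (real (3::nat)) * ln (real (7::nat)) \<ge> (ln 2 * ln 2) * (133/30)" using pr[OF a0 a0 l3 l7] by (simp add: algebra_simps)
    moreover have "ln 2 * ln (real (3::nat)) \<ge> (ln 2 * ln 2) * (19/12)" using pr[OF L0 a0 _ l3] by (simp add: algebra_simps)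
    moreover have "ln (real (5::nat)) * ln (real (11::nat)) \<ge> (ln 2 * ln 2) * (720/91)" using pr[OF a0 a0 l5 l11] by (simp add: algebra_simps)
    moreover have "ln 2 * ln (real (17::nat)) \<ge> (ln 2 * ln 2) * 4" using pr[OF L0 a0 _ l17] by (simp add: algebra_simps)
    moreover have "ln (real (3::nat)) * ln (real (19::nat)) \<ge> (ln 2 * ln 2) * (133/20)" using pr[OF a0 a0 l3 l19] by (simp add: algebra_simps)
    moreover have "ln (real (11::nat)) * ln (real (23::nat)) \<ge> (ln 2 * ln 2) * (108/7)" using pr[OF a0 a0 l11 l23] by (simp add: algebra_simps)
    ultimately show ?thesis by linarith
  qed
  moreover have "ln 2 * ln (2::real) \<ge> (307/443)*(307/443)" using pr[OF _ _ cL cL] by simp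
  then have "(ln 2 * ln (2::real)) * (4840681/3603600) \<ge> ((307/443)*(307/443)) * (4840681/3603600)"
    by (rule mult_right_mono) simp
  moreover have "((307/443)*(307/443)) * (4840681/3603600) \<ge> (0.620794::real)" by simp
  ultimately show ?thesis by linarith
qed


theorem theorem12p2:
  fixes \<epsilon> :: real
  assumes "\<epsilon> > 0"
  shows "summable (\<lambda>m. mangoldt (Suc m) * mangoldt (2 * Suc m + 1)
                         / (real (Suc m) * real (Suc m + 1)) :: real)
    \<and> (\<Sum>m. mangoldt (Suc m) * mangoldt (2 * Suc m + 1)
                         / (real (Suc m) * real (Suc m + 1)) :: real) \<ge> 0.620794
    \<and> (\<lambda>x::real. (\<Sum>n\<in>{1..nat \<lfloor>x\<rfloor>}.
            mangoldt (nat \<lfloor>x / real n\<rfloor>) * mangoldt (2 * nat \<lfloor>x / real n\<rfloor> + 1) :: real)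
          - (\<Sum>m. mangoldt (Suc m) * mangoldt (2 * Suc m + 1)
                         / (real (Suc m) * real (Suc m + 1)) :: real) * x)
       \<in> O[at_top](\<lambda>x. x powr ((2 + \<epsilon>) / 3) * (ln x) ^ 2)"
proof -
  have gge: "(\<lambda>m. mangoldt (Suc m) * mangoldt (2 * Suc m + 1)
                         / (real (Suc m) * real (Suc m + 1)) :: real) = gg"
    by (rule ext) (simp add: gg_def ff_def)
  have Se: "(\<Sum>n\<in>{1..nat \<lfloor>x\<rfloor>}.
            mangoldt (nat \<lfloor>x / real n\<rfloor>) * mangoldt (2 * nat \<lfloor>x / real n\<rfloor> + 1) :: real)
         = (\<Sum>n\<in>{1..nat \<lfloor>x\<rfloor>}. ff (nat \<lfloor>x / real n\<rfloor>))" for x :: real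
    by (simp add: ff_def)
  have lb: "(\<Sum>m. gg m) \<ge> 0.620794"
  proof -
    have "(\<Sum>m<11. gg m) \<le> (\<Sum>m. gg m)"
      by (rule sum_le_suminf[OF gg_summable]) (simp_all add: gg_nonneg)
    moreover have "(\<Sum>m<11. gg m) \<ge> 0.620794" using numeric unfolding gge .
    ultimately show ?thesis by linarith
  qed
  have big: "(\<lambda>x::real. (\<Sum>n\<in>{1..nat \<lfloor>x\<rfloor>}. ff (nat \<lfloor>x / real n\<rfloor>)) - (\<Sum>m. gg m) * x)
       \<in> O[at_top](\<lambda>x. x powr ((2 + \<epsilon>) / 3) * (ln x) ^ 2)"
  proof (rule bigoI[where c = 408])
    show "\<forall>\<^sub>F x in at_top. norm ((\<Sum>n\<in>{1..nat \<lfloor>x\<rfloor>}. ff (nat \<lfloor>x / real n\<rfloor>)) - (\<Sum>m. gg m) * x)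
           \<le> 408 * norm (x powr ((2 + \<epsilon>) / 3) * (ln x) ^ 2)"
      using eventually_ge_at_top[of "3::real"]
    proof eventually_elim
      case (elim x)
      have x1: "x \<ge> 1" using elim by simp
      have lnx: "0 \<le> ln x" using x1 by simp
      have h3: "3 * x \<le> x * x" using mult_right_mono[OF elim, of x] elim by simp
      have "2 * x + 1 \<le> x * x" using h3 elim by linarith
      then have "2 * x + 1 \<le> x ^ 2" by (simp add: power2_eq_square)
      then have "ln (2 * x + 1) \<le> ln (x ^ 2)" using elim by simp
      also have "\<dots> = 2 * ln x" using elim by (simp add: ln_realpow)
      finally have l: "ln (2 * x + 1) \<le> 2 * ln x" .
      have l0: "0 \<le> ln (2 * x + 1)" using elim by simp
      have l2: "ln (2 * x + 1) ^ 2 \<le> 4 * ln x ^ 2"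
        using power_mono[OF l l0, of 2] by (simp add: power_mult_distrib)
      have p: "x powr (2/3) \<le> x powr ((2 + \<epsilon>) / 3)"
        using x1 assms by (intro powr_mono) (auto simp: divide_right_mono)
      have "x powr (2/3) * ln (2 * x + 1) ^ 2 \<le> x powr ((2 + \<epsilon>) / 3) * (4 * ln x ^ 2)"
        using p l2 by (intro mult_mono) auto
      moreover have "x powr ((2 + \<epsilon>) / 3) * (4 * ln x ^ 2) = 4 * (x powr ((2 + \<epsilon>) / 3) * ln x ^ 2)"
        by (simp only: mult.left_commute)
      ultimately have "102 * (x powr (2/3) * ln (2 * x + 1) ^ 2) \<le> 408 * (x powr ((2 + \<epsilon>) / 3) * ln x ^ 2)"
        by linarith
      moreover have "norm (x powr ((2 + \<epsilon>) / 3) * (ln x) ^ 2) = x powr ((2 + \<epsilon>) / 3) * ln x ^ 2"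
        using lnx by simp
      ultimately show ?case using main_bound[OF elim] unfolding real_norm_def by linarith
    qed
  qed
  show ?thesis unfolding gge Se using gg_summable lb big by blast
qed

end
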